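(* Let $G$ be a $k$-uniform hypergraph with vertex set $\{1,\dots,n\}$ and edges $e_1,\dots,e_\ell$ (each a $k$-subset of $\{1,\dots,n\}$). Then $G$ is not $2$-DP-colorable if and only if there exist $(n-k)$-faces $a^1,\dots,a^\ell$ of $Q_2^n$ such that, for each $j$, the set of non-asterisk positions of $a^j$ is $e_j$, and $\bigcup_{j=1}^{\ell}(a^j\cup\overline{a^j})=Q_2^n$, where $\overline{a^j}$ denotes the face antipodal to $a^j$.
   Context: $Q_2^n=\{0,1\}^n$. An $m$-face of $Q_2^n$ is given by a tuple $a=(a_1,\dots,a_n)\in\{0,1,*\}^n$ with exactly $m$ entries equal to $*$; it denotes the set $\{x\in Q_2^n : x_i=a_i \text{ whenever } a_i\in\{0,1\}\}$. The face antipodal to $a$ is $\overline{a}$ with $\overline{a}_i=*$ where $a_i=*$ and $\overline{a}_i=1-a_i$ otherwise. For a hypergraph $G$, a collection $\Phi=(\varphi_e)_{e\in E(G)}$ consists of maps $\varphi_e:e\to\{0,1\}$; a $2$-coloring $f:V(G)\to\{0,1\}$ avoids $\Phi$ if for every edge $e$, $f|_e\neq\varphi_e$ and $f|_e\neq\varphi_e\oplus 1$ (the complementary map). $G$ is $2$-DP-colorable if for every such collection $\Phi$ there is a $2$-coloring avoiding $\Phi$. *)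

theory Defs
  imports Main "HOL-Library.FuncSet"
begin

definition cube :: "nat \<Rightarrow> (nat \<Rightarrow> nat) set" where
  "cube n = ({1..n} \<rightarrow>\<^sub>E {0, 1})"

text \<open>A tuple in {0,1,*}^n: None plays the role of the asterisk.\<close>
definition tuples :: "nat \<Rightarrow> (nat \<Rightarrow> nat option) set" where
  "tuples n = ({1..n} \<rightarrow>\<^sub>E {None, Some 0, Some 1})"

definition is_face :: "nat \<Rightarrow> nat \<Rightarrow> (nat \<Rightarrow> nat option) \<Rightarrow> bool" where
  "is_face n m a \<longleftrightarrow> a \<in> tuples n \<and> card {i \<in> {1..n}. a i = None} = m"

definition fixed_positions :: "nat \<Rightarrow> (nat \<Rightarrow> nat option) \<Rightarrow> nat set" where
  "fixed_positions n a = {i \<in> {1..n}. a i \<noteq> None}"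

definition face_set :: "nat \<Rightarrow> (nat \<Rightarrow> nat option) \<Rightarrow> (nat \<Rightarrow> nat) set" where
  "face_set n a = {x \<in> cube n. \<forall>i \<in> {1..n}. a i \<noteq> None \<longrightarrow> x i = the (a i)}"

definition antipodal :: "nat \<Rightarrow> (nat \<Rightarrow> nat option) \<Rightarrow> (nat \<Rightarrow> nat option)" where
  "antipodal n a = (\<lambda>i \<in> {1..n}. map_option (\<lambda>b. 1 - b) (a i))"

definition avoids :: "(nat set) list \<Rightarrow> (nat \<Rightarrow> nat \<Rightarrow> nat) \<Rightarrow> (nat \<Rightarrow> nat) \<Rightarrow> bool" where
  "avoids es Phi f \<longleftrightarrow>
     (\<forall>j < length es. restrict f (es ! j) \<noteq> Phi j
        \<and> restrict f (es ! j) \<noteq> (\<lambda>v \<in> es ! j. 1 - Phi j v))"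

definition dp2_colorable :: "nat \<Rightarrow> (nat set) list \<Rightarrow> bool" where
  "dp2_colorable n es \<longleftrightarrow>
     (\<forall>Phi. (\<forall>j < length es. Phi j \<in> (es ! j) \<rightarrow>\<^sub>E {0, 1}) \<longrightarrow>
        (\<exists>f \<in> {1..n} \<rightarrow>\<^sub>E {0, 1}. avoids es Phi f))"

end

theory Submission
  imports Defs
begin

lemma key:
  assumes e: "e \<subseteq> {1..n}" and a: "a \<in> tuples n" and fp: "fixed_positions n a = e"
    and f: "f \<in> cube n"
  shows "(f \<in> face_set n a \<longleftrightarrow> restrict f e = (\<lambda>v\<in>e. the (a v)))
       \<and> (f \<in> face_set n (antipodal n a) \<longleftrightarrow> restrict f e = (\<lambda>v\<in>e. 1 - the (a v)))"
proof -
  have ea: "\<And>i. i \<in> {1..n} \<Longrightarrow> (a i \<noteq> None) = (i \<in> e)"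
    using fp unfolding fixed_positions_def by auto
  have r1: "restrict f e = (\<lambda>v\<in>e. the (a v)) \<longleftrightarrow> (\<forall>i\<in>e. f i = the (a i))"
    unfolding restrict_def fun_eq_iff by auto
  have r2: "restrict f e = (\<lambda>v\<in>e. 1 - the (a v)) \<longleftrightarrow> (\<forall>i\<in>e. f i = 1 - the (a i))"
    unfolding restrict_def fun_eq_iff by auto
  show ?thesis
    unfolding r1 r2 face_set_def antipodal_def using f e ea
    by (auto simp: option.map_sel)
qed

theorem proposition7:
  fixes n k :: nat and es :: "nat set list"
  assumes "distinct es"
    and "\<forall>e \<in> set es. e \<subseteq> {1..n} \<and> card e = k"
  shows "\<not> dp2_colorable n es \<longleftrightarrow>
    (\<exists>a :: nat \<Rightarrow> nat \<Rightarrow> nat option.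
       (\<forall>j < length es. is_face n (n - k) (a j) \<and> fixed_positions n (a j) = es ! j)
       \<and> (\<Union>j < length es. face_set n (a j) \<union> face_set n (antipodal n (a j))) = cube n)"
proof -
  have es: "\<And>j. j < length es \<Longrightarrow> es ! j \<subseteq> {1..n} \<and> card (es ! j) = k"
    using assms(2) by auto
  have sub: "\<And>a. (\<Union>j < length es. face_set n (a j) \<union> face_set n (antipodal n (a j))) \<subseteq> cube n"
    unfolding face_set_def by auto
  have face: "is_face n (n - k) b" if "b \<in> tuples n" "fixed_positions n b = es ! j" "j < length es" for b j
  proof -
    have "{i \<in> {1..n}. b i = None} = {1..n} - es ! j"
      using that(2) unfolding fixed_positions_def by blast
    moreover have "card ({1..n} - es ! j) = n - k"
      using es[OF that(3)] by (metis card_Diff_subset card_atLeastAtMost diff_Suc_1 finite_subset finite_atLeastAtMost)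
    ultimately show ?thesis using that(1) unfolding is_face_def by simp
  qed
  show ?thesis
  proof
    assume "\<not> dp2_colorable n es"
    then obtain Phi where P: "\<forall>j < length es. Phi j \<in> (es ! j) \<rightarrow>\<^sub>E {0, 1}"
      and nf: "\<forall>f \<in> {1..n} \<rightarrow>\<^sub>E {0, 1}. \<not> avoids es Phi f"
      unfolding dp2_colorable_def by auto
    define a where "a = (\<lambda>j. \<lambda>i\<in>{1..n}. if i \<in> es ! j then Some (Phi j i) else None)"
    have Pj: "\<And>i. i \<in> es ! j \<Longrightarrow> Phi j i \<in> {0,1}" "Phi j \<in> extensional (es ! j)"
      if "j < length es" for j
      using P that by (auto simp: PiE_iff)
    have tup: "a j \<in> tuples n" if j: "j < length es" for j
      unfolding tuples_def PiE_iff
    proof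
      show "\<forall>i\<in>{1..n}. a j i \<in> {None, Some 0, Some 1}"
        using Pj(1)[OF j] unfolding a_def by auto
      show "a j \<in> extensional {1..n}"
        using es[OF j] unfolding a_def extensional_def by auto
    qed
    have fp: "fixed_positions n (a j) = es ! j" if "j < length es" for j
      using es[OF that] unfolding a_def fixed_positions_def by auto
    have PhiE: "Phi j = (\<lambda>v\<in>es ! j. the (a j v))" if "j < length es" for j
    proof
      fix v show "Phi j v = (\<lambda>v\<in>es ! j. the (a j v)) v"
        using Pj(2)[OF that] es[OF that] unfolding a_def extensional_def by auto
    qed
    have "cube n \<subseteq> (\<Union>j < length es. face_set n (a j) \<union> face_set n (antipodal n (a j)))"
    proof
      fix f assume f: "f \<in> cube n"
      then have "\<not> avoids es Phi f" using nf unfolding cube_def by auto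
      then obtain j where j: "j < length es" and
        h: "restrict f (es ! j) = Phi j \<or> restrict f (es ! j) = (\<lambda>v \<in> es ! j. 1 - Phi j v)"
        unfolding avoids_def by auto
      have h2: "restrict f (es ! j) = (\<lambda>v\<in>es ! j. the (a j v)) \<or>
               restrict f (es ! j) = (\<lambda>v\<in>es ! j. 1 - the (a j v))"
      proof -
        have e1: "(\<lambda>v\<in>es ! j. 1 - Phi j v) = (\<lambda>v\<in>es ! j. 1 - the (a j v))"
          by (rule restrict_cong) (auto simp: PhiE[OF j])
        show ?thesis using h e1 PhiE[OF j] by metis
      qed
      show "f \<in> (\<Union>j < length es. face_set n (a j) \<union> face_set n (antipodal n (a j)))"
        using key[OF _ tup[OF j] fp[OF j] f] es[OF j] h2 j by blast
    qed
    then show "\<exists>a :: nat \<Rightarrow> nat \<Rightarrow> nat option.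
       (\<forall>j < length es. is_face n (n - k) (a j) \<and> fixed_positions n (a j) = es ! j)
       \<and> (\<Union>j < length es. face_set n (a j) \<union> face_set n (antipodal n (a j))) = cube n"
      using sub[of a] tup fp face by (intro exI[of _ a]) auto
  next
    assume "\<exists>a :: nat \<Rightarrow> nat \<Rightarrow> nat option.
       (\<forall>j < length es. is_face n (n - k) (a j) \<and> fixed_positions n (a j) = es ! j)
       \<and> (\<Union>j < length es. face_set n (a j) \<union> face_set n (antipodal n (a j))) = cube n"
    then obtain a where A: "\<forall>j < length es. is_face n (n - k) (a j) \<and> fixed_positions n (a j) = es ! j"
      and U: "(\<Union>j < length es. face_set n (a j) \<union> face_set n (antipodal n (a j))) = cube n"
      by blast
    define Phi where "Phi = (\<lambda>j. (\<lambda>v\<in>es ! j. the (a j v)))"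
    have tup: "a j \<in> tuples n" if "j < length es" for j
      using A that unfolding is_face_def by auto
    have P: "\<forall>j < length es. Phi j \<in> (es ! j) \<rightarrow>\<^sub>E {0, 1}"
    proof (intro allI impI)
      fix j assume j: "j < length es"
      have "the (a j v) \<in> {0,1}" if v: "v \<in> es ! j" for v
      proof -
        have v1: "v \<in> {1..n}" using v es[OF j] by auto
        have "a j v \<noteq> None" using A j v1 v unfolding fixed_positions_def by auto
        moreover have "a j v \<in> {None, Some 0, Some 1}" using tup[OF j] v1 unfolding tuples_def by (rule PiE_mem)
        ultimately have "a j v = Some 0 \<or> a j v = Some 1" by (simp only: insert_iff empty_iff) blast
        then show ?thesis by auto
      qed
      then show "Phi j \<in> (es ! j) \<rightarrow>\<^sub>E {0, 1}" unfolding Phi_def by auto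
    qed
    have "\<not> avoids es Phi f" if f: "f \<in> {1..n} \<rightarrow>\<^sub>E {0, 1}" for f
    proof -
      have fc: "f \<in> cube n" using f unfolding cube_def .
      then obtain j where j: "j < length es" and
        h: "f \<in> face_set n (a j) \<or> f \<in> face_set n (antipodal n (a j))"
        using U by auto
      have e1: "(\<lambda>v\<in>es ! j. 1 - Phi j v) = (\<lambda>v\<in>es ! j. 1 - the (a j v))"
        by (rule restrict_cong) (auto simp: Phi_def)
      have "restrict f (es ! j) = Phi j \<or> restrict f (es ! j) = (\<lambda>v\<in>es ! j. 1 - Phi j v)"
        unfolding e1 using key[OF _ tup[OF j] _ fc, of "es ! j"] A j es[OF j] h
        unfolding Phi_def by blast
      then show ?thesis using j unfolding avoids_def by blast
    qed
    then show "\<not> dp2_colorable n es" using P unfolding dp2_colorable_def by auto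
  qed
qed

end
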